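(* Let $X$ be a complex Banach space and let $\mathcal{D}=\{X_n:n\ge1\}$ be a Schauder decomposition of $X$ which is not $R$-Schauder. Then: (a) there exists a sectorial operator $A$ on $X$ which is a $\mathcal{D}$-multiplier such that the set $\{e^{-tA^{-1}}:t\ge0\}$ is not $R$-bounded; (b) there exists a Ritt operator $T\in B(X)$ which is a $\mathcal{D}$-multiplier such that the set $\{T^n:n\ge0\}$ is not $R$-bounded.
   Context: $R$-boundedness: with $(\varepsilon_j)$ independent Rademacher variables on $(\Omega,\mathbb{P})$ and $\|\sum_{j=1}^k\varepsilon_j\otimes x_j\|_{R,X}=\int_\Omega\|\sum_j\varepsilon_j(u)x_j\|\,d\mathbb{P}(u)$, a set $F\subset B(X)$ is $R$-bounded if there is $K$ with $\|\sum_j\varepsilon_j\otimes T_j x_j\|_{R,X}\le K\|\sum_j\varepsilon_j\otimes x_j\|_{R,X}$ for all finite families $T_j\in F$, $x_j\in X$. A Schauder decomposition of $X$ is a sequence $\mathcal{D}=\{X_n:n\ge1\}$ of closed subspaces such that every $x\in X$ has a unique expansion $x=\sum_{n\ge1}x_n$ with $x_n\in X_n$; $p_n(x)=x_n$ and $P_N=\sum_{n=1}^Np_n$. $\mathcal{D}$ is $R$-Schauder if $\{P_N:N\ge1\}$ is $R$-bounded. A sectorial $\mathcal{D}$-multiplier is an operator $A$ of the form: for a nondecreasing sequence $(a_n)_{n\ge1}$ in $(0,\infty)$, $D(A)=\{x:\sum_na_np_n(x)\text{ converges}\}$, $Ax=\sum_na_np_n(x)$; such $A$ is sectorial of type $0$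 and invertible, with $A^{-1}\in B(X)$ given by $A^{-1}x=\sum_n a_n^{-1}p_n(x)$, and $(e^{-tA^{-1}})_{t\ge0}$ is the semigroup generated by $-A^{-1}$. A Ritt $\mathcal{D}$-multiplier is an operator $T(x)=\sum_{n\ge1}c_np_n(x)$ with $(c_n)$ a nondecreasing sequence in $(0,1)$; such $T$ is a Ritt operator, i.e. $\{T^n:n\ge0\}$ and $\{nT^n(I_X-T):n\ge1\}$ are bounded. *)

theory Defs
  imports "HOL-Analysis.Analysis"
begin

text \<open>A complex Banach space is modelled as a real Banach space (type class banach)
together with a complex structure J (multiplication by i): (a + ib) x = a x + b J x.\<close>
definition complex_structure :: "('a::real_normed_vector \<Rightarrow> 'a) \<Rightarrow> bool" where
  "complex_structure J \<longleftrightarrow> bounded_linear J \<and> (\<forall>x. J (J x) = - x)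
     \<and> (\<forall>\<theta> x. norm (cos \<theta> *\<^sub>R x + sin \<theta> *\<^sub>R J x) = norm x)"

definition closed_csubspace :: "('a::real_normed_vector \<Rightarrow> 'a) \<Rightarrow> 'a set \<Rightarrow> bool" where
  "closed_csubspace J S \<longleftrightarrow> closed S \<and> subspace S \<and> (\<forall>x\<in>S. J x \<in> S)"

text \<open>Schauder decomposition (indexed from 0 instead of 1).\<close>
definition schauder_decomposition ::
    "('a::real_normed_vector \<Rightarrow> 'a) \<Rightarrow> (nat \<Rightarrow> 'a set) \<Rightarrow> bool" where
  "schauder_decomposition J Xs \<longleftrightarrow> (\<forall>n. closed_csubspace J (Xs n)) \<and>
     (\<forall>x. \<exists>!u. (\<forall>n. u n \<in> Xs n) \<and> (\<lambda>N. \<Sum>n<N. u n) \<longlonglongrightarrow> x)"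

definition sd_coord :: "(nat \<Rightarrow> 'a::real_normed_vector set) \<Rightarrow> nat \<Rightarrow> 'a \<Rightarrow> 'a" where
  "sd_coord Xs n x = (THE u. (\<forall>m. u m \<in> Xs m) \<and> (\<lambda>N. \<Sum>m<N. u m) \<longlonglongrightarrow> x) n"

text \<open>Partial sum projections P_N = p_1 + ... + p_N (0-based: sum over n < N).\<close>
definition sd_partial :: "(nat \<Rightarrow> 'a::real_normed_vector set) \<Rightarrow> nat \<Rightarrow> 'a \<Rightarrow> 'a" where
  "sd_partial Xs N x = (\<Sum>n<N. sd_coord Xs n x)"

text \<open>Rademacher norm: integral over independent Rademacher variables, i.e. the average
over all sign vectors in {-1,1}^k.\<close>
definition rad_norm :: "nat \<Rightarrow> (nat \<Rightarrow> 'a::real_normed_vector) \<Rightarrow> real" where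
  "rad_norm k x = (\<Sum>e\<in>({..<k} \<rightarrow>\<^sub>E {-1::real, 1}). norm (\<Sum>j<k. e j *\<^sub>R x j)) / 2 ^ k"

definition R_bounded :: "('a::real_normed_vector \<Rightarrow> 'a) set \<Rightarrow> bool" where
  "R_bounded F \<longleftrightarrow> (\<exists>K. \<forall>k (T :: nat \<Rightarrow> 'a \<Rightarrow> 'a) (x :: nat \<Rightarrow> 'a).
      (\<forall>j<k. T j \<in> F) \<longrightarrow> rad_norm k (\<lambda>j. T j (x j)) \<le> K * rad_norm k x)"

definition R_schauder :: "('a::real_normed_vector \<Rightarrow> 'a) \<Rightarrow> (nat \<Rightarrow> 'a set) \<Rightarrow> bool" where
  "R_schauder J Xs \<longleftrightarrow> schauder_decomposition J Xs \<and> R_bounded {sd_partial Xs N | N. N \<ge> 1}"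

definition op_exp_neg :: "real \<Rightarrow> ('a::real_normed_vector \<Rightarrow> 'a) \<Rightarrow> 'a \<Rightarrow> 'a" where
  "op_exp_neg t B x = (\<Sum>k. ((- t) ^ k / fact k) *\<^sub>R (B ^^ k) x)"

end

theory Submission imports Defs begin


abbreviation "Ek k \<equiv> ({..<k} \<rightarrow>\<^sub>E {-1::real, 1})"

lemma rad_norm_nonneg: "rad_norm k x \<ge> 0"
  unfolding rad_norm_def by (intro divide_nonneg_pos sum_nonneg) auto

lemma rad_norm_cong: "(\<And>j. j < k \<Longrightarrow> x j = y j) \<Longrightarrow> rad_norm k x = rad_norm k y"
  unfolding rad_norm_def by (intro arg_cong2[where f="(/)"] sum.cong refl arg_cong[where f=norm]) auto

lemma rad_norm_add: "rad_norm k (\<lambda>j. x j + y j) \<le> rad_norm k x + rad_norm k y"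
proof -
  have "(\<Sum>e\<in>Ek k. norm (\<Sum>j<k. e j *\<^sub>R (x j + y j))) \<le> (\<Sum>e\<in>Ek k. norm (\<Sum>j<k. e j *\<^sub>R x j) + norm (\<Sum>j<k. e j *\<^sub>R y j))"
    by (intro sum_mono) (simp add: scaleR_add_right sum.distrib norm_triangle_ineq)
  then show ?thesis unfolding rad_norm_def by (simp add: sum.distrib add_divide_distrib[symmetric] divide_right_mono)
qed

lemma rad_norm_uminus: "rad_norm k (\<lambda>j. - x j) = rad_norm k x"
  unfolding rad_norm_def by (simp add: sum_negf)

lemma rad_norm_lin:
  assumes "linear L" "\<And>v. norm (L v) \<le> C * norm v" "C \<ge> 0"
  shows "rad_norm k (\<lambda>j. L (x j)) \<le> C * rad_norm k x"
proof -
  have "(\<Sum>e\<in>Ek k. norm (\<Sum>j<k. e j *\<^sub>R L (x j))) \<le> (\<Sum>e\<in>Ek k. C * norm (\<Sum>j<k. e j *\<^sub>R x j))"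
  proof (rule sum_mono)
    fix e
    have "(\<Sum>j<k. e j *\<^sub>R L (x j)) = L (\<Sum>j<k. e j *\<^sub>R x j)"
      by (simp add: linear_sum[OF assms(1)] linear_scale[OF assms(1)])
    then show "norm (\<Sum>j<k. e j *\<^sub>R L (x j)) \<le> C * norm (\<Sum>j<k. e j *\<^sub>R x j)" using assms(2) by simp
  qed
  then show ?thesis unfolding rad_norm_def by (simp add: sum_distrib_left[symmetric] divide_right_mono)
qed

lemma rad_norm_restrict: "rad_norm k (\<lambda>j. if Q j then x j else 0) \<le> rad_norm k x"
proof -
  define \<phi> where "\<phi> e = (\<lambda>j. if j < k \<and> \<not> Q j then - e j else e j)" for e :: "nat \<Rightarrow> real"
  have \<phi>E: "\<phi> e \<in> Ek k" if "e \<in> Ek k" for e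
    using that by (auto simp: \<phi>_def PiE_def Pi_def extensional_def)
  have \<phi>\<phi>: "\<phi> (\<phi> e) = e" for e by (auto simp: \<phi>_def)
  define A where "A e = (\<Sum>j<k. e j *\<^sub>R x j)" for e
  have key: "(\<Sum>j<k. e j *\<^sub>R (if Q j then x j else 0)) = (1/2) *\<^sub>R (A e + A (\<phi> e))" for e
  proof -
    have "(\<Sum>j<k. e j *\<^sub>R (if Q j then x j else 0)) = (\<Sum>j<k. (1/2) *\<^sub>R (e j *\<^sub>R x j + \<phi> e j *\<^sub>R x j))"
    proof (rule sum.cong)
      fix j assume "j \<in> {..<k}"
      then show "e j *\<^sub>R (if Q j then x j else 0) = (1/2) *\<^sub>R (e j *\<^sub>R x j + \<phi> e j *\<^sub>R x j)"
        using scaleR_2[of "x j"] by (auto simp: \<phi>_def scaleR_add_right[symmetric] scaleR_scaleR simp flip: scaleR_2)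
    qed simp
    then show ?thesis by (simp add: A_def scaleR_sum_right sum.distrib scaleR_add_right)
  qed
  have "(\<Sum>e\<in>Ek k. norm (\<Sum>j<k. e j *\<^sub>R (if Q j then x j else 0))) \<le> (\<Sum>e\<in>Ek k. (1/2) * norm (A e) + (1/2) * norm (A (\<phi> e)))"
    unfolding key by (intro sum_mono) (simp add: norm_triangle_ineq distrib_left[symmetric])
  also have "\<dots> = (1/2) * (\<Sum>e\<in>Ek k. norm (A e)) + (1/2) * (\<Sum>e\<in>Ek k. norm (A (\<phi> e)))"
    by (simp add: sum.distrib sum_distrib_left)
  also have "(\<Sum>e\<in>Ek k. norm (A (\<phi> e))) = (\<Sum>e\<in>Ek k. norm (A e))"
    by (rule sum.reindex_bij_witness[of _ \<phi> \<phi>]) (auto simp: \<phi>\<phi> \<phi>E)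
  finally have "(\<Sum>e\<in>Ek k. norm (\<Sum>j<k. e j *\<^sub>R (if Q j then x j else 0))) \<le> (\<Sum>e\<in>Ek k. norm (A e))" by simp
  then show ?thesis unfolding rad_norm_def A_def by (simp add: divide_right_mono)
qed

lemma rad_norm_zero: "rad_norm k (\<lambda>j. 0) = 0"
  by (simp add: rad_norm_def)

lemma rad_norm_sum:
  assumes "finite I"
  shows "rad_norm k (\<lambda>j. \<Sum>i\<in>I. f i j) \<le> (\<Sum>i\<in>I. rad_norm k (f i))"
  using assms
proof (induction I rule: finite_induct)
  case empty then show ?case by (simp add: rad_norm_zero)
next
  case (insert a I)
  then show ?case using rad_norm_add[of k "f a" "\<lambda>j. \<Sum>i\<in>I. f i j"] by simp
qed


lemma not_R_from_approx:
  fixes F :: "('a::real_normed_vector \<Rightarrow> 'a) set" and Ps G :: "nat \<Rightarrow> 'a \<Rightarrow> 'a"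
  assumes notR: "\<not> R_bounded {Ps N | N. N \<ge> 1}"
    and GF: "\<And>M. G M \<in> F" and Glin: "\<And>M. linear (G M)" and Pslin: "\<And>N. linear (Ps N)"
    and err: "\<And>M x. norm (Ps (Suc M) x - x + G M x) \<le> C * (1/2)^M * norm x"
  shows "\<not> R_bounded F"
proof
  assume "R_bounded F"
  then obtain K0 where K0: "\<And>k T x. (\<forall>j<k. T j \<in> F) \<Longrightarrow> rad_norm k (\<lambda>j. T j (x j)) \<le> K0 * rad_norm k x"
    unfolding R_bounded_def by blast
  define C' where "C' = max C 0"
  have C': "C' \<ge> 0" by (simp add: C'_def)
  define E where "E M v = Ps (Suc M) v - v + G M v" for M v
  have Elin: "linear (E M)" for M
    unfolding E_def by (intro linear_compose_add linear_compose_sub Pslin Glin linear_ident)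
  have Eb: "norm (E M v) \<le> (C' * (1/2)^M) * norm v" for M v
    using err[of M v] unfolding E_def C'_def
    by (rule order_trans) (intro mult_right_mono; simp)
  have geo: "(\<Sum>M\<in>S. (1/2::real)^M) \<le> 2" if "finite S" for S
  proof -
    have "(\<Sum>M\<in>S. (1/2::real)^M) \<le> (\<Sum>M. (1/2::real)^M)"
      by (rule sum_le_suminf) (use that summable_geometric[of "1/2::real"] in auto)
    also have "\<dots> = 2" by (simp add: suminf_geometric[of "1/2::real"])
    finally show ?thesis .
  qed
  have "R_bounded {Ps N | N. N \<ge> 1}"
    unfolding R_bounded_def
  proof (intro exI[of _ "1 + K0 + 2 * C'"] allI impI)
    fix k :: nat and T :: "nat \<Rightarrow> 'a \<Rightarrow> 'a" and x :: "nat \<Rightarrow> 'a" assume T: "\<forall>j<k. T j \<in> {Ps N | N. N \<ge> 1}"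
    define Mj where "Mj j = (SOME M. T j = Ps (Suc M))" for j
    have TM: "T j = Ps (Suc (Mj j))" if jk: "j < k" for j
    proof -
      obtain N where "T j = Ps N" "N \<ge> 1" using T jk by blast
      then have "T j = Ps (Suc (N - 1))" by simp
      then have "\<exists>M. T j = Ps (Suc M)" by blast
      then show ?thesis unfolding Mj_def by (rule someI_ex)
    qed
    define S where "S = Mj ` {..<k}"
    have S: "finite S" unfolding S_def by (rule finite_imageI) (rule finite_lessThan)
    have dec: "T j (x j) = (x j + - G (Mj j) (x j)) + (\<Sum>M\<in>S. E M (if Mj j = M then x j else 0))" if "j < k" for j
    proof -
      have "(\<Sum>M\<in>S. E M (if Mj j = M then x j else 0)) = (\<Sum>M\<in>S. if M = Mj j then E (Mj j) (x j) else 0)"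
        by (rule sum.cong) (auto simp: linear_0[OF Elin])
      also have "\<dots> = E (Mj j) (x j)" using that by (simp add: S_def sum.delta')
      finally show ?thesis using TM[OF that] by (simp add: E_def)
    qed
    have "rad_norm k (\<lambda>j. T j (x j)) = rad_norm k (\<lambda>j. (x j + - G (Mj j) (x j)) + (\<Sum>M\<in>S. E M (if Mj j = M then x j else 0)))"
      by (rule rad_norm_cong) (rule dec)
    also have "\<dots> \<le> (rad_norm k x + rad_norm k (\<lambda>j. G (Mj j) (x j))) + rad_norm k (\<lambda>j. \<Sum>M\<in>S. E M (if Mj j = M then x j else 0))"
      using rad_norm_add[of k "\<lambda>j. x j + - G (Mj j) (x j)" "\<lambda>j. \<Sum>M\<in>S. E M (if Mj j = M then x j else 0)"] rad_norm_add[of k x "\<lambda>j. - G (Mj j) (x j)"]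
        rad_norm_uminus[of k "\<lambda>j. G (Mj j) (x j)"] by linarith
    also have "rad_norm k (\<lambda>j. G (Mj j) (x j)) \<le> K0 * rad_norm k x"
      using K0[of k "\<lambda>j. G (Mj j)" x] GF by blast
    also have "rad_norm k (\<lambda>j. \<Sum>M\<in>S. E M (if Mj j = M then x j else 0)) \<le> (\<Sum>M\<in>S. rad_norm k (\<lambda>j. E M (if Mj j = M then x j else 0)))"
      by (rule rad_norm_sum[OF S])
    also have "\<dots> \<le> (\<Sum>M\<in>S. (C' * (1/2)^M) * rad_norm k x)"
    proof (rule sum_mono)
      fix M
      have "rad_norm k (\<lambda>j. E M (if Mj j = M then x j else 0)) \<le> (C' * (1/2)^M) * rad_norm k (\<lambda>j. if Mj j = M then x j else 0)"
        by (rule rad_norm_lin[OF Elin Eb]) (use C' in simp)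
      also have "\<dots> \<le> (C' * (1/2)^M) * rad_norm k x"
        by (rule mult_left_mono[OF rad_norm_restrict]) (use C' in simp)
      finally show "rad_norm k (\<lambda>j. E M (if Mj j = M then x j else 0)) \<le> (C' * (1/2)^M) * rad_norm k x" .
    qed
    also have "\<dots> = C' * (\<Sum>M\<in>S. (1/2)^M) * rad_norm k x"
      by (simp add: sum_distrib_left sum_distrib_right mult_ac)
    also have "\<dots> \<le> C' * 2 * rad_norm k x"
      using geo[OF S] C' rad_norm_nonneg[of k x] by (intro mult_right_mono mult_left_mono) auto
    finally show "rad_norm k (\<lambda>j. T j (x j)) \<le> (1 + K0 + 2 * C') * rad_norm k x"
      by (simp add: algebra_simps)
  qed
  with notR show False by blast
qed



definition hh :: "nat \<Rightarrow> real \<Rightarrow> real" where "hh k c = real k * c ^ k * (1 - c)"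

lemma hh_bound: assumes "0 \<le> c" "c \<le> 1" shows "0 \<le> hh k c" "hh k c \<le> 1"
proof -
  show "0 \<le> hh k c" using assms by (simp add: hh_def)
  have "real k * c ^ k = (\<Sum>j<k. c ^ k)" by simp
  also have "\<dots> \<le> (\<Sum>j<k. c ^ j)" by (intro sum_mono power_decreasing) (use assms in auto)
  finally have "hh k c \<le> (1 - c) * (\<Sum>j<k. c ^ j)" unfolding hh_def using assms
    by (simp add: mult.commute mult_left_mono)
  also have "\<dots> = 1 - c ^ k" by (simp add: one_diff_power_eq)
  also have "\<dots> \<le> 1" using assms by simp
  finally show "hh k c \<le> 1" .
qed

lemma hh_deriv: "(hh k has_real_derivative (real k * (real k * c ^ (k - 1) * (1 - c) - c ^ k))) (at c)"
  unfolding hh_def[abs_def]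
  by (auto intro!: derivative_eq_intros simp: algebra_simps)

lemma hh_deriv_sign:
  assumes "0 \<le> c"
  shows "c \<le> real k / (real k + 1) \<Longrightarrow> 0 \<le> real k * (real k * c ^ (k - 1) * (1 - c) - c ^ k)"
    and "real k / (real k + 1) \<le> c \<Longrightarrow> real k * (real k * c ^ (k - 1) * (1 - c) - c ^ k) \<le> 0"
proof -
  have eq: "real k * c ^ (k - 1) * (1 - c) - c ^ k = c ^ (k - 1) * (real k - (real k + 1) * c)" if "k \<ge> 1"
  proof -
    have "c ^ k = c ^ (k - 1) * c" using that by (metis Suc_diff_1 less_le_trans less_numeral_extra(1) power_Suc2 le_less)
    then show ?thesis by (simp add: algebra_simps)
  qed
  show "c \<le> real k / (real k + 1) \<Longrightarrow> 0 \<le> real k * (real k * c ^ (k - 1) * (1 - c) - c ^ k)"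
  proof (cases "k = 0")
    case False
    assume "c \<le> real k / (real k + 1)"
    then have "(real k + 1) * c \<le> real k" by (simp add: field_simps)
    then show ?thesis using eq False assms by simp
  qed simp
  show "real k / (real k + 1) \<le> c \<Longrightarrow> real k * (real k * c ^ (k - 1) * (1 - c) - c ^ k) \<le> 0"
  proof (cases "k = 0")
    case False
    assume "real k / (real k + 1) \<le> c"
    then have "(real k + 1) * c \<ge> real k" by (simp add: field_simps)
    then have "c ^ (k - 1) * (real k - (real k + 1) * c) \<le> 0" using assms by (simp add: mult_nonneg_nonpos)
    then show ?thesis using eq False assms by (simp add: mult_nonneg_nonpos)
  qed simp
qed

lemma hh_mono1:
  assumes "0 \<le> x" "x \<le> y" "y \<le> real k / (real k + 1)"
  shows "hh k x \<le> hh k y"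
  by (rule deriv_nonneg_imp_mono[OF hh_deriv _ assms(2)]) (use assms hh_deriv_sign(1) in auto)

lemma hh_mono2:
  assumes "real k / (real k + 1) \<le> x" "x \<le> y"
  shows "hh k y \<le> hh k x"
proof -
  have "0 \<le> x" using assms(1) by (smt (verit) divide_nonneg_nonneg of_nat_0_le_iff)
  then show ?thesis
    by (intro deriv_nonpos_imp_antimono[OF hh_deriv _ assms(2)]) (use assms hh_deriv_sign(2) in auto)
qed

definition lam :: "nat \<Rightarrow> real" where "lam n = (1/4) ^ (2 * n * n)"
definition sM :: "nat \<Rightarrow> real" where "sM M = 4 ^ (2 * M * M + 3 * M + 1)"

lemma lam_pos: "0 < lam n" and lam_le1: "lam n \<le> 1"
  by (auto simp: lam_def power_le_one)

lemma lam_antimono: "antimono lam"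
  unfolding antimono_def lam_def by (auto intro!: power_decreasing mult_mono)

lemma sM_lam_Suc: "sM M * lam (Suc M) = (1/4) ^ Suc M"
proof -
  have e: "2 * Suc M * Suc M = (2 * M * M + 3 * M + 1) + Suc M" by simp
  have "sM M * lam (Suc M) = (4 ^ (2 * M * M + 3 * M + 1) * (1/4) ^ (2 * M * M + 3 * M + 1)) * (1/4::real) ^ Suc M"
    unfolding sM_def lam_def e power_add by (simp only: mult_ac)
  also have "4 ^ (2 * M * M + 3 * M + 1) * (1/4::real) ^ (2 * M * M + 3 * M + 1) = 1"
    by (simp add: power_mult_distrib[symmetric])
  finally show ?thesis by simp
qed

lemma sM_lam: "sM M * lam M = 4 ^ (3 * M + 1)"
proof -
  have e: "2 * M * M + 3 * M + 1 = (3 * M + 1) + 2 * M * M" by simp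
  have "sM M * lam M = 4 ^ (3 * M + 1) * (4 ^ (2 * M * M) * (1/4::real) ^ (2 * M * M))"
    unfolding sM_def lam_def e power_add by (simp only: mult_ac)
  also have "4 ^ (2 * M * M) * (1/4::real) ^ (2 * M * M) = 1"
    by (simp add: power_mult_distrib[symmetric])
  finally show ?thesis by simp
qed

lemma exp_head: "exp (- ((4::real) ^ (3 * M + 1))) \<le> (1/4) ^ Suc M"
proof -
  define y :: real where "y = 4 ^ (3 * M + 1)"
  have y: "y > 0" by (simp add: y_def)
  have "y \<le> exp y" using exp_ge_add_one_self[of y] by linarith
  then have "exp (- y) \<le> 1 / y" using y by (simp add: exp_minus field_simps)
  also have "1 / y \<le> 1 / 4 ^ Suc M" unfolding y_def by (intro divide_left_mono power_increasing) auto
  finally show ?thesis by (simp add: y_def power_one_over)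
qed

lemma eta_bounds: "(1/4::real) ^ Suc M * real (Suc M) \<le> (1/2) ^ M" "(1/4::real) ^ Suc M \<le> (1/2) ^ M"
proof -
  have "Suc M \<le> 2 ^ Suc M" using less_exp[of "Suc M"] by (simp add: less_imp_le)
  then have "real (Suc M) \<le> real (2 ^ Suc M)" by (simp only: of_nat_le_iff)
  then have "real (Suc M) \<le> 2 ^ Suc M" by simp
  also have "\<dots> \<le> 2 ^ (M + 2)" by (intro power_increasing) auto
  finally have a: "real (Suc M) \<le> 2 ^ (M + 2)" .
  have q: "(1/4::real) = (1/2)^2" by (simp add: power2_eq_square)
  have "(1/4::real) ^ Suc M = (1/2) ^ (2 * Suc M)" unfolding q by (simp only: power_mult)
  also have "2 * Suc M = M + (M + 2)" by simp
  finally have q4: "(1/4::real) ^ Suc M = (1/2) ^ M * (1/2) ^ (M + 2)" by (simp only: power_add)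
  then show "(1/4::real) ^ Suc M * real (Suc M) \<le> (1/2) ^ M"
  proof -
    have "(1/2::real)^(M+2) * real (Suc M) \<le> (1/2)^(M+2) * 2^(M+2)" by (rule mult_left_mono[OF a]) simp
    also have "\<dots> = 1" by (simp add: power_mult_distrib[symmetric])
    finally have b: "(1/2::real)^(M+2) * real (Suc M) \<le> 1" .
    have "(1/4::real) ^ Suc M * real (Suc M) = (1/2)^M * ((1/2)^(M+2) * real (Suc M))"
      using q4 by simp
    also have "\<dots> \<le> (1/2)^M * 1" by (rule mult_left_mono[OF b]) simp
    finally show ?thesis by simp
  qed
  show "(1/4::real) ^ Suc M \<le> (1/2) ^ M"
  proof -
    have "(1/2::real)^(M+2) \<le> 1" by (rule power_le_one) auto
    then show ?thesis unfolding q4 by (rule mult_left_le) simp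
  qed
qed


locale sdec =
  fixes J :: "'a::banach \<Rightarrow> 'a" and Xs :: "nat \<Rightarrow> 'a set"
  assumes sd: "schauder_decomposition J Xs"
begin

abbreviation p where "p \<equiv> sd_coord Xs"
abbreviation P where "P \<equiv> sd_partial Xs"

lemma subsp: "subspace (Xs n)" and clo: "closed (Xs n)"
  using sd by (auto simp: schauder_decomposition_def closed_csubspace_def)

lemma ex1: "\<exists>!u. (\<forall>n. u n \<in> Xs n) \<and> (\<lambda>N. \<Sum>n<N. u n) \<longlonglongrightarrow> x"
  using sd by (auto simp: schauder_decomposition_def)

lemma coord_eq: "(\<lambda>n. p n x) = (THE u. (\<forall>n. u n \<in> Xs n) \<and> (\<lambda>N. \<Sum>n<N. u n) \<longlonglongrightarrow> x)"
  by (auto simp: sd_coord_def)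

lemma coord: "\<forall>n. p n x \<in> Xs n" "(\<lambda>N. \<Sum>n<N. p n x) \<longlonglongrightarrow> x"
  using theI'[OF ex1[of x]] unfolding coord_eq[symmetric] by auto

lemma coord_mem: "p n x \<in> Xs n" using coord by auto

lemma coord_unique:
  assumes "\<And>n. u n \<in> Xs n" "(\<lambda>N. \<Sum>n<N. u n) \<longlonglongrightarrow> x"
  shows "p n x = u n"
proof -
  have "(THE u. (\<forall>n. u n \<in> Xs n) \<and> (\<lambda>N. \<Sum>n<N. u n) \<longlonglongrightarrow> x) = u"
    by (rule the1_equality[OF ex1]) (use assms in auto)
  then show ?thesis unfolding coord_eq[symmetric] by (metis)
qed

lemma coord_add: "p n (x + y) = p n x + p n y"
  by (rule coord_unique) (auto intro: subspace_add[OF subsp] coord_mem tendsto_add coord simp: sum.distrib)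

lemma coord_scale: "p n (c *\<^sub>R x) = c *\<^sub>R p n x"
  by (rule coord_unique) (auto intro: subspace_scale[OF subsp] coord_mem tendsto_scaleR coord simp: scaleR_sum_right[symmetric])

lemma linear_coord: "linear (p n)"
  by (rule linearI) (simp_all add: coord_add coord_scale)

lemma coord_of_mem:
  assumes "v \<in> Xs j"
  shows "p n v = (if n = j then v else 0)"
proof (rule coord_unique)
  show "(if m = j then v else 0) \<in> Xs m" for m using assms subspace_0[OF subsp] by auto
  have "eventually (\<lambda>N. (\<Sum>m<N. (if m = j then v else 0)) = v) sequentially"
    using eventually_ge_at_top[of "Suc j"] by eventually_elim auto
  then show "(\<lambda>N. \<Sum>m<N. (if m = j then v else 0)) \<longlonglongrightarrow> v"
    by (rule tendsto_eventually)
qed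

lemma P_def': "P N x = (\<Sum>n<N. p n x)" by (simp add: sd_partial_def)

lemma P_tendsto: "(\<lambda>N. P N x) \<longlonglongrightarrow> x" using coord(2) by (simp add: P_def')

lemma linear_P: "linear (P N)"
  unfolding P_def' by (rule linearI) (simp_all add: coord_add coord_scale sum.distrib scaleR_sum_right)

lemma coord_P: "p n (P N x) = (if n < N then p n x else 0)"
proof (rule coord_unique)
  show "(if m < N then p m x else 0) \<in> Xs m" for m using coord_mem subspace_0[OF subsp] by auto
  have "eventually (\<lambda>M. (\<Sum>m<M. (if m < N then p m x else 0)) = P N x) sequentially"
    using eventually_ge_at_top[of N]
  proof eventually_elim
    case (elim M)
    then have "{..<M} = {..<N} \<union> {N..<M}" by auto
    then show ?case by (simp add: sum.union_disjoint P_def' ivl_disj_int)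
  qed
  then show "(\<lambda>M. \<Sum>m<M. (if m < N then p m x else 0)) \<longlonglongrightarrow> P N x"
    by (rule tendsto_eventually)
qed

lemma coord_ext: assumes "\<And>n. p n x = p n y" shows "x = y"
proof -
  have "(\<lambda>N. P N x) = (\<lambda>N. P N y)" using assms by (simp add: P_def')
  then show ?thesis using P_tendsto[of x] P_tendsto[of y] LIMSEQ_unique by metis
qed


lemma coord_diff_P: "p n x = P (Suc n) x - P n x" by (simp add: P_def')

lemma iterate_bound:
  fixes c r :: real
  assumes r: "r > 0"
    and approx: "\<And>j w e. norm w < r * (1/2)^j \<Longrightarrow> e > 0 \<Longrightarrow>
        \<exists>x. (\<forall>N. norm (P N x) \<le> c * (1/2)^j) \<and> norm (w - x) < e"
    and y: "norm y < r"
  shows "norm (P N y) \<le> 2 * c"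
proof -
  define pick where "pick j w = (SOME x. (\<forall>N. norm (P N x) \<le> c * (1/2)^j) \<and> norm (w - x) < r * (1/2)^(Suc j))" for j w
  have pick: "(\<forall>N. norm (P N (pick j w)) \<le> c * (1/2)^j) \<and> norm (w - pick j w) < r * (1/2)^(Suc j)"
    if "norm w < r * (1/2)^j" for j w
    unfolding pick_def by (rule someI_ex) (rule approx[OF that], use r in simp)
  define res where "res = rec_nat y (\<lambda>j w. w - pick j w)"
  have res0: "res 0 = y" and resS: "res (Suc j) = res j - pick j (res j)" for j
    by (simp_all add: res_def)
  have resn: "norm (res j) < r * (1/2)^j" for j
    by (induction j) (use y pick in \<open>auto simp: res0 resS\<close>)
  define x where "x j = pick j (res j)" for j
  have xb: "norm (P N (x j)) \<le> c * (1/2)^j" for N j using pick[OF resn] by (auto simp: x_def)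
  have c0: "c \<ge> 0" using xb[of 0 0] norm_ge_zero[of "P 0 (x 0)"] by (simp del: norm_ge_zero)
  have xsum: "(\<Sum>i<j. x i) = y - res j" for j
    by (induction j) (simp_all add: res0 resS x_def)
  have geo: "summable (\<lambda>i. c * (1/2::real)^i)" by (simp add: summable_geometric)
  have geo2: "(\<Sum>i. c * (1/2::real)^i) = 2 * c" by (simp add: suminf_geometric[of "1/2::real"] suminf_mult)
  have pnb: "norm (p n (x i)) \<le> 2 * c * (1/2)^i" for n i
  proof -
    have "norm (p n (x i)) \<le> norm (P (Suc n) (x i)) + norm (P n (x i))"
      unfolding coord_diff_P by (rule norm_triangle_ineq4)
    also have "\<dots> \<le> 2 * c * (1/2)^i" using xb[of "Suc n" i] xb[of n i] by simp
    finally show ?thesis .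
  qed
  have sump: "summable (\<lambda>i. p n (x i))" for n
    by (rule summable_comparison_test[where g="\<lambda>i. 2 * c * (1/2)^i"])
       (use pnb summable_geometric in \<open>auto intro!: summable_mult\<close>)
  define w where "w n = (\<Sum>i. p n (x i))" for n
  have wmem: "w n \<in> Xs n" for n
  proof -
    have "(\<lambda>j. \<Sum>i<j. p n (x i)) \<longlonglongrightarrow> w n" unfolding w_def using sump summable_LIMSEQ by blast
    moreover have "(\<Sum>i<j. p n (x i)) \<in> Xs n" for j
      by (rule subspace_sum[OF subsp]) (auto intro: coord_mem)
    ultimately show ?thesis using closed_sequentially[OF clo, of "\<lambda>j. \<Sum>i<j. p n (x i)"] by blast
  qed
  have sumP: "summable (\<lambda>i. P N (x i))" for N
    unfolding P_def' by (rule summable_sum) (use sump in auto)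
  have yN: "(\<Sum>n<N. w n) = (\<Sum>i. P N (x i))" for N
    unfolding w_def P_def' by (rule suminf_sum[symmetric]) (use sump in auto)
  have yNb: "norm (\<Sum>n<N. w n) \<le> 2 * c" for N
    unfolding yN geo2[symmetric] by (rule norm_suminf_le) (use xb geo in auto)
  have tail: "norm ((\<Sum>n<N. w n) - P N (y - res j)) \<le> 2 * c * (1/2)^j" for N j
  proof -
    have "(\<Sum>n<N. w n) - P N (y - res j) = (\<Sum>i. P N (x (i + j)))"
      unfolding yN xsum[symmetric] using suminf_split_initial_segment[OF sumP[of N], of j]
      by (simp add: linear_sum[OF linear_P])
    also have "norm \<dots> \<le> (\<Sum>i. c * (1/2)^(i+j))"
      by (rule norm_suminf_le) (use xb summable_ignore_initial_segment[OF geo] in auto)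
    also have "(\<Sum>i. c * (1/2::real)^(i+j)) = (\<Sum>i. (c * (1/2)^j) * (1/2)^i)"
      by (simp add: power_add mult_ac)
    also have "\<dots> = 2 * c * (1/2)^j"
      by (simp add: suminf_mult summable_geometric suminf_geometric[of "1/2::real"])
    finally show ?thesis .
  qed
  have lim: "(\<lambda>N. \<Sum>n<N. w n) \<longlonglongrightarrow> y"
  proof (rule LIMSEQ_I)
    fix e :: real assume e: "e > 0"
    obtain j where j: "(2 * c + r) * (1/2)^j < e / 2"
    proof -
      have "(\<lambda>j. (2 * c + r) * (1/2::real)^j) \<longlonglongrightarrow> 0"
        by (intro tendsto_mult_right_zero LIMSEQ_power_zero) auto
      then obtain j where "norm ((2 * c + r) * (1/2::real)^j) < e/2" using e
        by (metis LIMSEQ_D diff_zero half_gt_zero le_refl real_norm_def)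
      then show ?thesis using that c0 r by (auto simp: abs_mult)
    qed
    obtain M where M: "\<And>N. N \<ge> M \<Longrightarrow> norm (P N (y - res j) - (y - res j)) < e/2"
      using LIMSEQ_D[OF P_tendsto[of "y - res j"], of "e/2"] e by auto
    show "\<exists>M. \<forall>N\<ge>M. norm ((\<Sum>n<N. w n) - y) < e"
    proof (intro exI allI impI)
      fix N assume "N \<ge> M"
      have "norm ((\<Sum>n<N. w n) - y) \<le> norm ((\<Sum>n<N. w n) - P N (y - res j))
          + norm (P N (y - res j) - (y - res j)) + norm (res j)"
      proof -
        have "(\<Sum>n<N. w n) - y = ((\<Sum>n<N. w n) - P N (y - res j)) + (P N (y - res j) - (y - res j)) - res j"
          by simp
        then have "norm ((\<Sum>n<N. w n) - y) = norm (((\<Sum>n<N. w n) - P N (y - res j)) + (P N (y - res j) - (y - res j)) - res j)"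
          by (rule arg_cong)
        then show ?thesis
          using norm_triangle_ineq4[of "((\<Sum>n<N. w n) - P N (y - res j)) + (P N (y - res j) - (y - res j))" "res j"]
            norm_triangle_ineq[of "(\<Sum>n<N. w n) - P N (y - res j)" "P N (y - res j) - (y - res j)"]
          by linarith
      qed
      also have "\<dots> < 2 * c * (1/2)^j + e/2 + r * (1/2)^j"
        using tail[of N j] M[OF \<open>N \<ge> M\<close>] resn[of j] by linarith
      also have "\<dots> < e" using j by (simp add: algebra_simps)
      finally show "norm ((\<Sum>n<N. w n) - y) < e" .
    qed
  qed
  have "p n y = w n" for n by (rule coord_unique) (use wmem lim in auto)
  then have "P N y = (\<Sum>n<N. w n)" by (simp add: P_def')
  then show ?thesis using yNb by simp
qed


lemma unif_bound: "\<exists>K>0. \<forall>N x. norm (P N x) \<le> K * norm x"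
proof -
  define Bs where "Bs c = {x. \<forall>N. norm (P N x) \<le> c}" for c :: real
  have cover: "\<Union> (range (\<lambda>k::nat. closure (Bs (real k)))) = UNIV"
  proof -
    have "\<exists>k::nat. x \<in> Bs (real k)" for x
    proof -
      have "Bseq (\<lambda>N. P N x)" using P_tendsto[of x] by (rule convergent_imp_Bseq[OF convergentI])
      then obtain K where "\<forall>N. norm (P N x) \<le> K" by (auto simp: Bseq_def)
      moreover obtain k :: nat where "K \<le> real k" using real_arch_simple by blast
      ultimately show ?thesis by (auto simp: Bs_def intro: order_trans)
    qed
    then show ?thesis using closure_subset by blast
  qed
  have "\<exists>k::nat. interior (closure (Bs (real k))) \<noteq> {}"
  proof (rule ccontr)
    assume "\<not> ?thesis"
    then have "Met_TC.mtopology interior_of \<Union> (range (\<lambda>k::nat. closure (Bs (real k)))) = {}"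
      by (intro Met_TC.metric_Baire_category_alt) (auto simp: complete_UNIV euclidean_interior_of)
    then show False using cover by (simp add: euclidean_interior_of)
  qed
  then obtain k :: nat where "interior (closure (Bs (real k))) \<noteq> {}" by blast
  then obtain z r where r: "r > 0" and zr: "ball z r \<subseteq> closure (Bs (real k))"
    by (metis ex_in_conv interior_subset open_contains_ball open_interior subset_trans)
  have approx: "\<exists>x. (\<forall>N. norm (P N x) \<le> real k * (1/2)^j) \<and> norm (w - x) < e"
    if w: "norm w < r * (1/2)^j" and e: "e > 0" for j w e
  proof -
    define s :: real where "s = 2^j"
    have s1: "s \<ge> 1" by (simp add: s_def)
    have sw: "norm (s *\<^sub>R w) < r" using w by (simp add: s_def power_one_over field_simps)
    have "z + s *\<^sub>R w \<in> closure (Bs (real k))" "z - s *\<^sub>R w \<in> closure (Bs (real k))"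
      using zr sw by (auto simp: dist_norm subset_iff)
    then obtain y1 y2 where y1: "y1 \<in> Bs (real k)" "dist y1 (z + s *\<^sub>R w) < e"
      and y2: "y2 \<in> Bs (real k)" "dist y2 (z - s *\<^sub>R w) < e"
      using e by (meson closure_approachable)
    define x where "x = (1 / (2 * s)) *\<^sub>R (y1 - y2)"
    have "norm (P N x) \<le> real k * (1/2)^j" for N
    proof -
      have "P N x = (1 / (2 * s)) *\<^sub>R (P N y1 - P N y2)"
        by (simp add: x_def linear_scale[OF linear_P] linear_diff[OF linear_P])
      then have "norm (P N x) \<le> (1 / (2 * s)) * (norm (P N y1) + norm (P N y2))"
        using s1 by (simp add: divide_right_mono norm_triangle_ineq4)
      also have "\<dots> \<le> (1 / (2 * s)) * (real k + real k)"
        using y1 y2 s1 by (intro mult_left_mono add_mono) (auto simp: Bs_def)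
      also have "\<dots> = real k * (1/2)^j" by (simp add: s_def power_one_over)
      finally show ?thesis .
    qed
    moreover have "norm (w - x) < e"
    proof -
      define a where "a = (z + s *\<^sub>R w) - y1"
      define b where "b = (z - s *\<^sub>R w) - y2"
      have eq: "w - x = (1 / (2 * s)) *\<^sub>R (a - b)"
        unfolding a_def b_def x_def using s1 apply (simp add: algebra_simps scaleR_diff_right)
        using scaleR_add_left[of "1/2" "1/2" w] by simp
      have "norm (w - x) = (1 / (2 * s)) * norm (a - b)"
        using s1 by (simp only: eq norm_scaleR) simp
      also have "\<dots> \<le> (1 / (2 * s)) * (norm a + norm b)"
        by (rule mult_left_mono[OF norm_triangle_ineq4]) (use s1 in simp)
      also have "\<dots> < (1 / (2 * s)) * (e + e)"
        using y1 y2 s1 by (intro mult_strict_left_mono add_strict_mono) (auto simp: a_def b_def dist_norm norm_minus_commute)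
      also have "\<dots> \<le> e" using s1 e by (simp add: field_simps)
      finally show ?thesis .
    qed
    ultimately show ?thesis by blast
  qed
  have yb: "norm (P N y) \<le> 2 * real k" if "norm y < r" for y N
    by (rule iterate_bound[OF r approx that])
  show ?thesis
  proof (intro exI[of _ "4 * real k / r + 1"] conjI allI)
    show "4 * real k / r + 1 > 0" using r by (simp add: add_nonneg_pos)
    fix N x
    show "norm (P N x) \<le> (4 * real k / r + 1) * norm x"
    proof (cases "x = 0")
      case True then show ?thesis by (simp add: linear_0[OF linear_P])
    next
      case False
      define t where "t = r / (2 * norm x)"
      have t: "t > 0" using r False by (simp add: t_def)
      have "norm (t *\<^sub>R x) < r" using r False by (simp add: t_def)
      then have "norm (P N (t *\<^sub>R x)) \<le> 2 * real k" by (rule yb)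
      then have "t * norm (P N x) \<le> 2 * real k" using t by (simp add: linear_scale[OF linear_P])
      then have "norm (P N x) \<le> 2 * real k / t" using t by (simp add: field_simps)
      also have "\<dots> = 4 * real k / r * norm x" using r False by (simp add: t_def field_simps)
      also have "\<dots> \<le> (4 * real k / r + 1) * norm x" by (simp add: distrib_right)
      finally show ?thesis .
    qed
  qed
qed


definition Kb where "Kb = (SOME K. K > 0 \<and> (\<forall>N x. norm (P N x) \<le> K * norm x))"

lemma Kb: "Kb > 0" "norm (P N x) \<le> Kb * norm x"
  using someI_ex[OF unif_bound] unfolding Kb_def[symmetric] by auto

lemma coord_bound: "norm (p n x) \<le> 2 * Kb * norm x"
proof -
  have "norm (p n x) \<le> norm (P (Suc n) x) + norm (P n x)"
    unfolding coord_diff_P by (rule norm_triangle_ineq4)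
  also have "\<dots> \<le> 2 * Kb * norm x" using Kb(2)[of "Suc n" x] Kb(2)[of n x] by simp
  finally show ?thesis .
qed

lemma bl_coord: "bounded_linear (p n)"
  by (rule bounded_linear_intro[where K="2 * Kb"]) (simp_all add: coord_add coord_scale, metis coord_bound mult.commute mult.left_commute)

lemma bl_P: "bounded_linear (P N)"
  by (rule bounded_linear_intro[where K="Kb"]) (simp_all add: linear_add[OF linear_P] linear_scale[OF linear_P], metis Kb(2) mult.commute)

definition bv :: "(nat \<Rightarrow> real) \<Rightarrow> real \<Rightarrow> real \<Rightarrow> bool" where
  "bv m \<beta> V \<longleftrightarrow> (\<forall>n. \<bar>m n\<bar> \<le> \<beta>) \<and> (\<forall>N. (\<Sum>n<N. \<bar>m (Suc n) - m n\<bar>) \<le> V)"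

definition Mop :: "(nat \<Rightarrow> real) \<Rightarrow> 'a \<Rightarrow> 'a" where
  "Mop m x = lim (\<lambda>N. \<Sum>n<N. m n *\<^sub>R p n x)"

lemma mult_conv:
  assumes "bv m \<beta> V"
  shows "(\<lambda>N. \<Sum>n<N. m n *\<^sub>R p n x) \<longlonglongrightarrow> Mop m x"
    and "norm (Mop m x) \<le> (\<beta> * (Kb + 2) + V * (Kb + 1)) * norm x"
proof -
  have mb: "\<bar>m n\<bar> \<le> \<beta>" for n using assms by (auto simp: bv_def)
  have vb: "(\<Sum>n<N. \<bar>m (Suc n) - m n\<bar>) \<le> V" for N using assms by (auto simp: bv_def)
  define Q where "Q n = P n x - x" for n
  have Qb: "norm (Q n) \<le> (Kb + 1) * norm x" for n
    unfolding Q_def using norm_triangle_ineq4[of "P n x" x] Kb(2)[of n x] by (simp add: distrib_right)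
  have Q0: "Q 0 = - x" by (simp add: Q_def P_def')
  have QL: "Q \<longlonglongrightarrow> 0" unfolding Q_def using P_tendsto[of x] by (simp add: LIM_zero)
  define d where "d n = m (Suc n) - m n" for n
  have step: "m n *\<^sub>R p n x = (m (Suc n) *\<^sub>R Q (Suc n) - m n *\<^sub>R Q n) - d n *\<^sub>R Q (Suc n)" for n
    by (simp add: Q_def d_def coord_diff_P algebra_simps)
  have SN: "(\<Sum>n<N. m n *\<^sub>R p n x) = m N *\<^sub>R Q N - m 0 *\<^sub>R Q 0 - (\<Sum>n<N. d n *\<^sub>R Q (Suc n))" for N
  proof -
    have "(\<Sum>n<N. m n *\<^sub>R p n x) = (\<Sum>n<N. (m (Suc n) *\<^sub>R Q (Suc n) - m n *\<^sub>R Q n)) - (\<Sum>n<N. d n *\<^sub>R Q (Suc n))"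
      by (simp only: step sum_subtractf[of "\<lambda>n. m (Suc n) *\<^sub>R Q (Suc n) - m n *\<^sub>R Q n" "\<lambda>n. d n *\<^sub>R Q (Suc n)"])
    also have "(\<Sum>n<N. (m (Suc n) *\<^sub>R Q (Suc n) - m n *\<^sub>R Q n)) = m N *\<^sub>R Q N - m 0 *\<^sub>R Q 0"
      by (rule sum_lessThan_telescope)
    finally show ?thesis .
  qed
  have sd: "summable (\<lambda>n. \<bar>d n\<bar>)"
    by (rule summableI_nonneg_bounded[where x=V]) (use vb in \<open>auto simp: d_def\<close>)
  have sdQ: "summable (\<lambda>n. d n *\<^sub>R Q (Suc n))"
    by (rule summable_comparison_test[where g="\<lambda>n. \<bar>d n\<bar> * ((Kb + 1) * norm x)"])
       (use Qb sd in \<open>auto intro!: summable_mult2 mult_left_mono\<close>)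
  have RL: "(\<lambda>N. m N *\<^sub>R Q N) \<longlonglongrightarrow> 0"
    by (rule tendsto_0_le[OF QL, where K=\<beta>]) (use mb in \<open>auto intro!: always_eventually simp: mult.commute mult_right_mono\<close>)
  have lim: "(\<lambda>N. \<Sum>n<N. m n *\<^sub>R p n x) \<longlonglongrightarrow> 0 - m 0 *\<^sub>R Q 0 - (\<Sum>n. d n *\<^sub>R Q (Suc n))"
    unfolding SN by (intro tendsto_diff RL tendsto_const summable_LIMSEQ sdQ)
  then have "Mop m x = 0 - m 0 *\<^sub>R Q 0 - (\<Sum>n. d n *\<^sub>R Q (Suc n))"
    unfolding Mop_def by (rule limI)
  with lim show conv: "(\<lambda>N. \<Sum>n<N. m n *\<^sub>R p n x) \<longlonglongrightarrow> Mop m x" by simp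
  have bN: "norm (\<Sum>n<N. m n *\<^sub>R p n x) \<le> (\<beta> * (Kb + 2) + V * (Kb + 1)) * norm x" for N
  proof -
    have "norm (\<Sum>n<N. m n *\<^sub>R p n x) \<le> norm (m N *\<^sub>R Q N) + norm (m 0 *\<^sub>R Q 0) + norm (\<Sum>n<N. d n *\<^sub>R Q (Suc n))"
      unfolding SN by (metis (no_types, lifting) add_mono norm_triangle_ineq4 order_trans order_refl)
    also have "norm (m N *\<^sub>R Q N) \<le> \<beta> * ((Kb + 1) * norm x)"
      using mb Qb by (simp add: mult_mono')
    also have "norm (m 0 *\<^sub>R Q 0) \<le> \<beta> * norm x"
      using mb by (simp add: Q0 mult_right_mono)
    also have "norm (\<Sum>n<N. d n *\<^sub>R Q (Suc n)) \<le> (\<Sum>n<N. \<bar>d n\<bar> * ((Kb + 1) * norm x))"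
      by (rule order_trans[OF norm_sum]) (use Qb in \<open>auto intro!: sum_mono mult_left_mono\<close>)
    also have "\<dots> = (\<Sum>n<N. \<bar>d n\<bar>) * ((Kb + 1) * norm x)" by (simp add: sum_distrib_right)
    also have "\<dots> \<le> V * ((Kb + 1) * norm x)"
      using vb[of N] Kb(1) by (intro mult_right_mono) (auto simp: d_def)
    finally show ?thesis by (simp add: algebra_simps)
  qed
  show "norm (Mop m x) \<le> (\<beta> * (Kb + 2) + V * (Kb + 1)) * norm x"
    by (rule LIMSEQ_le_const2[OF tendsto_norm[OF conv]]) (use bN in auto)
qed

lemma Mop_bl:
  assumes "bv m \<beta> V"
  shows "bounded_linear (Mop m)"
proof (rule bounded_linear_intro[where K="\<beta> * (Kb + 2) + V * (Kb + 1)"])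
  fix x y
  have "(\<lambda>N. \<Sum>n<N. m n *\<^sub>R p n (x + y)) \<longlonglongrightarrow> Mop m x + Mop m y"
    unfolding coord_add scaleR_add_right sum.distrib by (intro tendsto_add mult_conv[OF assms])
  then show "Mop m (x + y) = Mop m x + Mop m y" using mult_conv(1)[OF assms] LIMSEQ_unique by blast
next
  fix r x
  have "(\<lambda>N. \<Sum>n<N. m n *\<^sub>R p n (r *\<^sub>R x)) \<longlonglongrightarrow> r *\<^sub>R Mop m x"
  proof -
    have "(\<lambda>N. \<Sum>n<N. m n *\<^sub>R p n (r *\<^sub>R x)) = (\<lambda>N. r *\<^sub>R (\<Sum>n<N. m n *\<^sub>R p n x))"
      by (simp add: coord_scale scaleR_sum_right mult.commute)
    then show ?thesis by (simp add: mult_conv[OF assms] tendsto_scaleR)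
  qed
  then show "Mop m (r *\<^sub>R x) = r *\<^sub>R Mop m x" using mult_conv(1)[OF assms] LIMSEQ_unique by blast
next
  fix x show "norm (Mop m x) \<le> norm x * (\<beta> * (Kb + 2) + V * (Kb + 1))"
    using mult_conv(2)[OF assms] by (simp add: mult.commute)
qed

lemma coord_Mop:
  assumes "bv m \<beta> V"
  shows "p j (Mop m x) = m j *\<^sub>R p j x"
proof -
  have "(\<lambda>N. p j (\<Sum>n<N. m n *\<^sub>R p n x)) \<longlonglongrightarrow> p j (Mop m x)"
    by (rule bounded_linear.tendsto[OF bl_coord mult_conv(1)[OF assms]])
  moreover have "eventually (\<lambda>N. p j (\<Sum>n<N. m n *\<^sub>R p n x) = m j *\<^sub>R p j x) sequentially"
    using eventually_ge_at_top[of "Suc j"]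
  proof eventually_elim
    case (elim N)
    have "p j (\<Sum>n<N. m n *\<^sub>R p n x) = (\<Sum>n<N. m n *\<^sub>R p j (p n x))"
      by (simp add: linear_sum[OF linear_coord] coord_scale)
    also have "\<dots> = (\<Sum>n<N. if n = j then m j *\<^sub>R p j x else 0)"
      by (rule sum.cong) (auto simp: coord_of_mem[OF coord_mem])
    also have "\<dots> = m j *\<^sub>R p j x" using elim by simp
    finally show ?case .
  qed
  then have "(\<lambda>N. p j (\<Sum>n<N. m n *\<^sub>R p n x)) \<longlonglongrightarrow> m j *\<^sub>R p j x" by (rule tendsto_eventually)
  ultimately show ?thesis using LIMSEQ_unique by blast
qed

lemma bv_mono:
  assumes "mono m" "\<And>n. \<bar>m n\<bar> \<le> \<beta>"
  shows "bv m \<beta> (2 * \<beta>)"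
proof -
  have "(\<Sum>n<N. \<bar>m (Suc n) - m n\<bar>) = (\<Sum>n<N. m (Suc n) - m n)" for N
    using assms(1) by (intro sum.cong) (auto simp: mono_def)
  then have "(\<Sum>n<N. \<bar>m (Suc n) - m n\<bar>) = m N - m 0" for N by (simp add: sum_lessThan_telescope)
  moreover have "m N - m 0 \<le> 2 * \<beta>" for N using assms(2)[of 0] assms(2)[of N] by (simp add: abs_le_iff)
  ultimately show ?thesis using assms(2) by (simp add: bv_def)
qed

lemma bv_antimono:
  assumes "antimono m" "\<And>n. \<bar>m n\<bar> \<le> \<beta>"
  shows "bv m \<beta> (2 * \<beta>)"
proof -
  have "(\<Sum>n<N. \<bar>m (Suc n) - m n\<bar>) = (\<Sum>n<N. (- m) (Suc n) - (- m) n)" for N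
    using assms(1) by (intro sum.cong) (auto simp: antimono_def)
  then have "(\<Sum>n<N. \<bar>m (Suc n) - m n\<bar>) = m 0 - m N" for N by (simp add: sum_lessThan_telescope')
  moreover have "m 0 - m N \<le> 2 * \<beta>" for N using assms(2)[of 0] assms(2)[of N] by (simp add: abs_le_iff)
  ultimately show ?thesis using assms(2) by (simp add: bv_def)
qed

lemma bv_diff:
  assumes "bv u \<beta>1 V1" "bv v \<beta>2 V2"
  shows "bv (\<lambda>n. u n - v n) (\<beta>1 + \<beta>2) (V1 + V2)"
proof -
  have "(\<Sum>n<N. \<bar>(u (Suc n) - v (Suc n)) - (u n - v n)\<bar>) \<le> (\<Sum>n<N. \<bar>u (Suc n) - u n\<bar>) + (\<Sum>n<N. \<bar>v (Suc n) - v n\<bar>)" for N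
    unfolding sum.distrib[symmetric] by (rule sum_mono) linarith
  moreover have "\<bar>u n - v n\<bar> \<le> \<beta>1 + \<beta>2" for n
    using assms unfolding bv_def using abs_triangle_ineq4[of "u n" "v n"] by (meson add_mono order_trans)
  ultimately show ?thesis using assms unfolding bv_def by (meson add_mono order_trans)
qed


lemma coord_fin:
  assumes "finite S"
  shows "p j (\<Sum>n\<in>S. f n *\<^sub>R p n x) = (if j \<in> S then f j *\<^sub>R p j x else 0)"
proof -
  have "p j (\<Sum>n\<in>S. f n *\<^sub>R p n x) = (\<Sum>n\<in>S. f n *\<^sub>R p j (p n x))"
    by (simp add: linear_sum[OF linear_coord] coord_scale)
  also have "\<dots> = (\<Sum>n\<in>S. if n = j then f j *\<^sub>R p j x else 0)"
    by (rule sum.cong) (auto simp: coord_of_mem[OF coord_mem])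
  also have "\<dots> = (if j \<in> S then f j *\<^sub>R p j x else 0)" using assms by (simp add: sum.delta')
  finally show ?thesis .
qed

lemma approx_mult:
  assumes g: "mono g" "\<And>n. 0 \<le> g n" "\<And>n. g n \<le> 1" and gM: "g M \<le> \<eta>" and gS: "1 - \<eta> \<le> g (Suc M)"
  shows "norm (P (Suc M) x - x + Mop g x) \<le> \<eta> * (real (Suc M) * (2 * Kb) + (3 * Kb + 4) * (Kb + 1)) * norm x"
proof -
  have eta: "\<eta> \<ge> 0" using g(2)[of M] gM by simp
  have bvg: "bv g 1 2" using bv_mono[OF g(1), of 1] g(2,3) by (simp add: abs_le_iff)
  define D where "D n = g (max n (Suc M)) - 1" for n
  have monoD: "mono D" unfolding D_def mono_def using g(1) by (auto simp: mono_def)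
  have Db: "\<bar>D n\<bar> \<le> \<eta>" for n
  proof -
    have "g (Suc M) \<le> g (max n (Suc M))" using g(1) by (auto simp: mono_def)
    then show ?thesis using gS g(3)[of "max n (Suc M)"] by (simp add: D_def abs_le_iff)
  qed
  have bvD: "bv D \<eta> (2 * \<eta>)" by (rule bv_mono[OF monoD Db])
  define H where "H = (\<Sum>n<Suc M. g n *\<^sub>R p n x)"
  have eq: "P (Suc M) x - x + Mop g x = H + Mop D (x - P (Suc M) x)"
  proof (rule coord_ext)
    fix j
    have l: "p j (P (Suc M) x - x + Mop g x) = (if j < Suc M then p j x else 0) - p j x + g j *\<^sub>R p j x"
      by (simp add: linear_add[OF linear_coord] linear_diff[OF linear_coord] coord_P coord_Mop[OF bvg])
    have r: "p j (H + Mop D (x - P (Suc M) x)) = (if j < Suc M then g j *\<^sub>R p j x else 0) + D j *\<^sub>R (p j x - (if j < Suc M then p j x else 0))"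
      unfolding H_def by (simp only: linear_add[OF linear_coord] linear_diff[OF linear_coord] coord_fin[OF finite_lessThan] lessThan_iff)
        (simp add: coord_P coord_Mop[OF bvD] linear_diff[OF linear_coord])
    show "p j (P (Suc M) x - x + Mop g x) = p j (H + Mop D (x - P (Suc M) x))"
      unfolding l r by (auto simp: D_def max_def algebra_simps)
  qed
  have Hb: "norm H \<le> real (Suc M) * (\<eta> * (2 * Kb * norm x))"
  proof -
    have "norm H \<le> (\<Sum>n<Suc M. \<eta> * (2 * Kb * norm x))"
      unfolding H_def
    proof (rule order_trans[OF norm_sum], rule sum_mono)
      fix n assume "n \<in> {..<Suc M}"
      then have "g n \<le> g M" using g(1) by (simp add: mono_def)
      then have "g n \<le> \<eta>" using gM by simp
      then show "norm (g n *\<^sub>R p n x) \<le> \<eta> * (2 * Kb * norm x)"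
        using g(2)[of n] coord_bound[of n x] by (simp add: mult_mono')
    qed
    then show ?thesis by simp
  qed
  have Db2: "norm (Mop D (x - P (Suc M) x)) \<le> \<eta> * (3 * Kb + 4) * ((Kb + 1) * norm x)"
  proof -
    have "norm (Mop D (x - P (Suc M) x)) \<le> (\<eta> * (Kb + 2) + 2 * \<eta> * (Kb + 1)) * norm (x - P (Suc M) x)"
      by (rule mult_conv(2)[OF bvD])
    also have "norm (x - P (Suc M) x) \<le> (Kb + 1) * norm x"
      using norm_triangle_ineq4[of x "P (Suc M) x"] Kb(2)[of "Suc M" x] by (simp add: distrib_right)
    then have "(\<eta> * (Kb + 2) + 2 * \<eta> * (Kb + 1)) * norm (x - P (Suc M) x) \<le> (\<eta> * (Kb + 2) + 2 * \<eta> * (Kb + 1)) * ((Kb + 1) * norm x)"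
      using eta Kb(1) by (intro mult_left_mono) auto
    finally show ?thesis by (simp add: algebra_simps)
  qed
  have "norm (P (Suc M) x - x + Mop g x) \<le> norm H + norm (Mop D (x - P (Suc M) x))"
    unfolding eq by (rule norm_triangle_ineq)
  also have "\<dots> \<le> real (Suc M) * (\<eta> * (2 * Kb * norm x)) + \<eta> * (3 * Kb + 4) * ((Kb + 1) * norm x)"
    using Hb Db2 by linarith
  also have "\<dots> = \<eta> * (real (Suc M) * (2 * Kb) + (3 * Kb + 4) * (Kb + 1)) * norm x"
    by (simp add: algebra_simps)
  finally show ?thesis .
qed


lemma bv_hh:
  assumes cm: "mono c" and c01: "\<And>n. 0 \<le> c n" "\<And>n. c n \<le> 1"
  shows "bv (\<lambda>n. hh k (c n)) 2 4"
proof -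
  define cs where "cs = real k / (real k + 1)"
  have cs: "0 \<le> cs" "cs \<le> 1" by (auto simp: cs_def)
  define u where "u n = hh k (min (c n) cs)" for n
  define v where "v n = u n - hh k (c n)" for n
  have mu: "mono u"
    unfolding mono_def u_def
  proof (intro allI impI)
    fix n n' :: nat assume "n \<le> n'"
    then have "c n \<le> c n'" using cm by (simp add: mono_def)
    then show "hh k (min (c n) cs) \<le> hh k (min (c n') cs)"
      by (intro hh_mono1) (use c01 cs in \<open>auto simp: cs_def min_def\<close>)
  qed
  have ub: "\<bar>u n\<bar> \<le> 1" for n
    unfolding u_def using hh_bound[of "min (c n) cs" k] c01[of n] cs by auto
  have mv: "mono v"
    unfolding mono_def
  proof (intro allI impI)
    fix n n' :: nat assume "n \<le> n'"
    then have cc: "c n \<le> c n'" using cm by (simp add: mono_def)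
    show "v n \<le> v n'"
    proof (cases "c n' \<le> cs")
      case True
      then show ?thesis using cc by (simp add: v_def u_def min_def)
    next
      case False
      then have v': "v n' = hh k cs - hh k (c n')" by (simp add: v_def u_def min_def)
      show ?thesis
      proof (cases "c n \<le> cs")
        case True
        then have "v n = 0" by (simp add: v_def u_def min_def)
        moreover have "hh k (c n') \<le> hh k cs" using False by (intro hh_mono2) (auto simp: cs_def)
        ultimately show ?thesis using v' by simp
      next
        case F2: False
        then have "v n = hh k cs - hh k (c n)" by (simp add: v_def u_def min_def)
        moreover have "hh k (c n') \<le> hh k (c n)" using F2 cc by (intro hh_mono2) (auto simp: cs_def)
        ultimately show ?thesis using v' by simp
      qed
    qed
  qed
  have vb: "\<bar>v n\<bar> \<le> 1" for n
  proof (cases "c n \<le> cs")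
    case True then show ?thesis by (simp add: v_def u_def min_def)
  next
    case False
    then have "v n = hh k cs - hh k (c n)" by (simp add: v_def u_def min_def)
    moreover have "hh k (c n) \<le> hh k cs" using False by (intro hh_mono2) (auto simp: cs_def)
    moreover have "0 \<le> hh k (c n)" "hh k cs \<le> 1" using hh_bound[of "c n" k] hh_bound[of cs k] c01[of n] cs by auto
    ultimately show ?thesis by simp
  qed
  have "bv (\<lambda>n. u n - v n) (1 + 1) (2 * 1 + 2 * 1)"
    by (intro bv_diff bv_mono mu mv ub vb)
  moreover have "(\<lambda>n. u n - v n) = (\<lambda>n. hh k (c n))" by (simp add: v_def)
  ultimately show ?thesis by simp
qed

lemma part_a:
  assumes notR: "\<not> R_bounded {P N | N. N \<ge> 1}"
  shows "\<exists>a :: nat \<Rightarrow> real. mono a \<and> (\<forall>n. 0 < a n) \<and>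
           (\<exists>B :: 'a \<Rightarrow> 'a. bounded_linear B \<and>
              (\<forall>x. (\<lambda>N. \<Sum>n<N. (1 / a n) *\<^sub>R p n x) \<longlonglongrightarrow> B x) \<and>
              \<not> R_bounded {op_exp_neg t B | t. t \<ge> 0})"
proof -
  define a :: "nat \<Rightarrow> real" where "a n = 4 ^ (2 * n * n)" for n
  have ainv: "1 / a n = lam n" for n by (simp add: a_def lam_def power_one_over)
  have amono: "mono a" unfolding mono_def a_def by (auto intro!: power_increasing mult_mono)
  have apos: "0 < a n" for n by (simp add: a_def)
  have bvl: "bv lam 1 2" using bv_antimono[OF lam_antimono, of 1] lam_pos lam_le1 by (simp add: abs_le_iff less_imp_le)
  define B where "B = Mop lam"
  have bvlk: "bv (\<lambda>n. lam n ^ k) 1 2" for k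
  proof -
    have "antimono (\<lambda>n. lam n ^ k)"
      unfolding antimono_def using lam_antimono lam_pos by (auto simp: antimono_def less_imp_le intro!: power_mono)
    moreover have "\<bar>lam n ^ k\<bar> \<le> 1" for n using lam_pos[of n] lam_le1[of n] by (simp add: power_le_one)
    ultimately show ?thesis using bv_antimono by fastforce
  qed
  have Bpow: "(B ^^ k) x = Mop (\<lambda>n. lam n ^ k) x" for k x
  proof (induction k arbitrary: x)
    case 0
    show ?case by (rule coord_ext) (simp add: coord_Mop[OF bvlk[of 0], simplified])
  next
    case (Suc k)
    have e: "(B ^^ Suc k) x = Mop lam (Mop (\<lambda>n. lam n ^ k) x)" using Suc by (simp add: B_def)
    show ?case unfolding e
    proof (rule coord_ext)
      fix j
      show "p j (Mop lam (Mop (\<lambda>n. lam n ^ k) x)) = p j (Mop (\<lambda>n. lam n ^ Suc k) x)"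
        unfolding coord_Mop[OF bvl] coord_Mop[OF bvlk] by simp
    qed
  qed
  have Bkb: "norm ((B ^^ k) x) \<le> (3 * Kb + 4) * norm x" for k x
    unfolding Bpow using mult_conv(2)[OF bvlk] by (simp add: algebra_simps)
  have bvg: "bv (\<lambda>n. exp (- (t * lam n))) 1 2" if t: "t \<ge> 0" for t
  proof -
    have m: "mono (\<lambda>n. exp (- (t * lam n)))"
      unfolding mono_def using lam_antimono t by (auto simp: antimono_def intro!: mult_left_mono)
    have b: "\<bar>exp (- (t * lam n))\<bar> \<le> 1" for n using t lam_pos[of n] by simp
    from bv_mono[OF m b] show ?thesis by simp
  qed
  have expB: "op_exp_neg t B x = Mop (\<lambda>n. exp (- (t * lam n))) x" if t: "t \<ge> 0" for t x
  proof (rule coord_ext)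
    fix j
    define S where "S k = ((- t) ^ k / fact k) *\<^sub>R (B ^^ k) x" for k
    have sumS: "summable S"
    proof (rule summable_comparison_test[where g="\<lambda>k. ((3 * Kb + 4) * norm x) * (inverse (fact k) * \<bar>t\<bar> ^ k)"])
      show "summable (\<lambda>k. ((3 * Kb + 4) * norm x) * (inverse (fact k) * \<bar>t\<bar> ^ k))"
        by (intro summable_mult summable_exp)
      show "\<exists>N. \<forall>n\<ge>N. norm (S n) \<le> (3 * Kb + 4) * norm x * (inverse (fact n) * \<bar>t\<bar> ^ n)"
      proof (intro exI allI impI)
        fix n
        have "norm (S n) = (\<bar>t\<bar> ^ n / fact n) * norm ((B ^^ n) x)" by (simp add: S_def power_abs)
        also have "\<dots> \<le> (\<bar>t\<bar> ^ n / fact n) * ((3 * Kb + 4) * norm x)" by (intro mult_left_mono Bkb) auto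
        finally show "norm (S n) \<le> (3 * Kb + 4) * norm x * (inverse (fact n) * \<bar>t\<bar> ^ n)"
          by (simp add: field_simps)
      qed
    qed
    have "p j (op_exp_neg t B x) = p j (suminf S)" by (simp add: op_exp_neg_def S_def[abs_def])
    also have "\<dots> = (\<Sum>k. p j (S k))" by (rule bounded_linear.suminf[OF bl_coord sumS])
    also have "\<dots> = (\<Sum>k. (inverse (fact k) * (- (t * lam j)) ^ k) *\<^sub>R p j x)"
    proof (rule arg_cong[where f=suminf], rule ext)
      fix k
      have "p j (S k) = ((- t) ^ k / fact k) *\<^sub>R (lam j ^ k *\<^sub>R p j x)"
        by (simp only: S_def Bpow coord_scale coord_Mop[OF bvlk])
      also have "\<dots> = (((- t) ^ k / fact k) * lam j ^ k) *\<^sub>R p j x" by (rule scaleR_scaleR)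
      also have "(- (t * lam j)) ^ k = (- t) ^ k * lam j ^ k" by (simp only: minus_mult_left power_mult_distrib)
      then have "((- t) ^ k / fact k) * lam j ^ k = inverse (fact k) * (- (t * lam j)) ^ k"
        by (simp add: divide_inverse mult_ac)
      finally show "p j (S k) = (inverse (fact k) * (- (t * lam j)) ^ k) *\<^sub>R p j x" .
    qed
    also have "\<dots> = (\<Sum>k. inverse (fact k) * (- (t * lam j)) ^ k) *\<^sub>R p j x"
      by (rule suminf_scaleR_left[symmetric]) (rule summable_exp)
    also have "(\<Sum>k. inverse (fact k) * (- (t * lam j)) ^ k) = exp (- (t * lam j))"
      by (simp add: exp_def field_simps)
    finally show "p j (op_exp_neg t B x) = p j (Mop (\<lambda>n. exp (- (t * lam n))) x)"
      by (simp add: coord_Mop[OF bvg[OF t]])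
  qed
  define C where "C = 2 * Kb + (3 * Kb + 4) * (Kb + 1)"
  have notRB: "\<not> R_bounded {op_exp_neg t B | t. t \<ge> 0}"
  proof (rule not_R_from_approx[OF notR, where G="\<lambda>M. op_exp_neg (sM M) B" and C=C])
    have sM0: "sM M \<ge> 0" for M by (simp add: sM_def)
    show "op_exp_neg (sM M) B \<in> {op_exp_neg t B | t. t \<ge> 0}" for M using sM0 by blast
    show "linear (op_exp_neg (sM M) B)" for M
    proof -
      have "op_exp_neg (sM M) B = Mop (\<lambda>n. exp (- (sM M * lam n)))" using expB[OF sM0] by (intro ext) simp
      then show ?thesis using Mop_bl[OF bvg[OF sM0]] bounded_linear.linear by metis
    qed
    show "linear (P N)" for N by (rule linear_P)
    fix M x
    define \<eta> :: real where "\<eta> = (1/4) ^ Suc M"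
    have "norm (P (Suc M) x - x + Mop (\<lambda>n. exp (- (sM M * lam n))) x)
        \<le> \<eta> * (real (Suc M) * (2 * Kb) + (3 * Kb + 4) * (Kb + 1)) * norm x"
    proof (rule approx_mult)
      show "mono (\<lambda>n. exp (- (sM M * lam n)))"
        unfolding mono_def using lam_antimono sM0[of M] by (auto simp: antimono_def intro!: mult_left_mono)
      show "0 \<le> exp (- (sM M * lam n))" for n by simp
      show "exp (- (sM M * lam n)) \<le> 1" for n using sM0[of M] lam_pos[of n] by simp
      show "exp (- (sM M * lam M)) \<le> \<eta>" unfolding sM_lam \<eta>_def by (rule exp_head)
      show "1 - \<eta> \<le> exp (- (sM M * lam (Suc M)))"
        unfolding sM_lam_Suc \<eta>_def using exp_ge_add_one_self[of "- ((1/4::real) ^ Suc M)"] by simp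
    qed
    also have "\<eta> * (real (Suc M) * (2 * Kb) + (3 * Kb + 4) * (Kb + 1)) \<le> C * (1/2)^M"
    proof -
      have "\<eta> * (real (Suc M) * (2 * Kb) + (3 * Kb + 4) * (Kb + 1)) = (\<eta> * real (Suc M)) * (2 * Kb) + \<eta> * ((3 * Kb + 4) * (Kb + 1))"
        by (simp add: algebra_simps)
      also have "\<dots> \<le> (1/2)^M * (2 * Kb) + (1/2)^M * ((3 * Kb + 4) * (Kb + 1))"
        using eta_bounds[of M] Kb(1) unfolding \<eta>_def by (intro add_mono mult_right_mono) auto
      finally show ?thesis by (simp add: C_def algebra_simps)
    qed
    then have "\<eta> * (real (Suc M) * (2 * Kb) + (3 * Kb + 4) * (Kb + 1)) * norm x \<le> C * (1/2)^M * norm x"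
      by (rule mult_right_mono) simp
    finally show "norm (P (Suc M) x - x + op_exp_neg (sM M) B x) \<le> C * (1 / 2) ^ M * norm x"
      using expB[OF sM0] by simp
  qed
  show ?thesis
  proof (intro exI conjI allI)
    show "mono a" by (rule amono)
    show "0 < a n" for n by (rule apos)
    show "bounded_linear B" unfolding B_def by (rule Mop_bl[OF bvl])
    show "(\<lambda>N. \<Sum>n<N. (1 / a n) *\<^sub>R p n x) \<longlonglongrightarrow> B x" for x
      unfolding ainv B_def by (rule mult_conv(1)[OF bvl])
    show "\<not> R_bounded {op_exp_neg t B | t. t \<ge> 0}" by (rule notRB)
  qed
qed


lemma part_b:
  assumes notR: "\<not> R_bounded {P N | N. N \<ge> 1}"
  shows "\<exists>c :: nat \<Rightarrow> real. mono c \<and> (\<forall>n. 0 < c n \<and> c n < 1) \<and>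
           (\<exists>T :: 'a \<Rightarrow> 'a. bounded_linear T \<and>
              (\<forall>x. (\<lambda>N. \<Sum>n<N. c n *\<^sub>R p n x) \<longlonglongrightarrow> T x) \<and>
              (\<exists>M. \<forall>n x. norm ((T ^^ n) x) \<le> M * norm x) \<and>
              (\<exists>M. \<forall>n x. n \<ge> 1 \<longrightarrow> norm (real n *\<^sub>R (T ^^ n) (x - T x)) \<le> M * norm x) \<and>
              \<not> R_bounded {T ^^ n | n. True})"
proof -
  define c where "c n = 1 - lam n / 2" for n
  have cmono: "mono c" unfolding mono_def c_def using lam_antimono by (auto simp: antimono_def)
  have c01: "0 < c n" "c n < 1" for n using lam_pos[of n] lam_le1[of n] by (auto simp: c_def)
  have bvc: "bv c 1 2" using bv_mono[OF cmono, of 1] c01 by (simp add: abs_le_iff less_imp_le)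
  have bvck: "bv (\<lambda>n. c n ^ k) 1 2" for k
  proof -
    have "mono (\<lambda>n. c n ^ k)"
      unfolding mono_def using cmono c01 by (auto simp: mono_def less_imp_le intro!: power_mono)
    moreover have "\<bar>c n ^ k\<bar> \<le> 1" for n using c01[of n] by (simp add: power_le_one less_imp_le)
    ultimately show ?thesis using bv_mono by fastforce
  qed
  define T where "T = Mop c"
  have Tpow: "(T ^^ k) x = Mop (\<lambda>n. c n ^ k) x" for k x
  proof (induction k arbitrary: x)
    case 0
    show ?case by (rule coord_ext) (simp add: coord_Mop[OF bvck[of 0], simplified])
  next
    case (Suc k)
    have e: "(T ^^ Suc k) x = Mop c (Mop (\<lambda>n. c n ^ k) x)" using Suc by (simp add: T_def)
    show ?case unfolding e
    proof (rule coord_ext)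
      fix j
      show "p j (Mop c (Mop (\<lambda>n. c n ^ k) x)) = p j (Mop (\<lambda>n. c n ^ Suc k) x)"
        unfolding coord_Mop[OF bvc] coord_Mop[OF bvck] by simp
    qed
  qed
  have Tkb: "norm ((T ^^ k) x) \<le> (3 * Kb + 4) * norm x" for k x
    unfolding Tpow using mult_conv(2)[OF bvck] by (simp add: algebra_simps)
  have bvh: "bv (\<lambda>n. hh k (c n)) 2 4" for k
    by (rule bv_hh[OF cmono]) (use c01 in \<open>auto simp: less_imp_le\<close>)
  have ritt: "real k *\<^sub>R (T ^^ k) (x - T x) = Mop (\<lambda>n. hh k (c n)) x" for k x
  proof (rule coord_ext)
    fix j
    have "p j (real k *\<^sub>R (T ^^ k) (x - T x)) = real k *\<^sub>R (c j ^ k *\<^sub>R (p j x - c j *\<^sub>R p j x))"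
    proof -
      have 1: "p j ((T ^^ k) (x - T x)) = c j ^ k *\<^sub>R p j (x - T x)" by (simp only: Tpow coord_Mop[OF bvck])
      have 2: "p j (x - T x) = p j x - c j *\<^sub>R p j x"
        by (simp add: linear_diff[OF linear_coord] T_def coord_Mop[OF bvc])
      show ?thesis by (simp only: coord_scale 1 2)
    qed
    also have "\<dots> = hh k (c j) *\<^sub>R p j x" by (simp add: hh_def algebra_simps)
    finally show "p j (real k *\<^sub>R (T ^^ k) (x - T x)) = p j (Mop (\<lambda>n. hh k (c n)) x)"
      by (simp add: coord_Mop[OF bvh])
  qed
  define mM :: "nat \<Rightarrow> nat" where "mM M = 2 * 4 ^ (2 * M * M + 3 * M + 1)" for M
  have mMr: "real (mM M) = 2 * sM M" for M by (simp add: mM_def sM_def)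
  define C where "C = 2 * Kb + (3 * Kb + 4) * (Kb + 1)"
  have notRT: "\<not> R_bounded {T ^^ n | n. True}"
  proof (rule not_R_from_approx[OF notR, where G="\<lambda>M. T ^^ mM M" and C=C])
    show "T ^^ mM M \<in> {T ^^ n | n. True}" for M by blast
    show "linear (T ^^ mM M)" for M
    proof -
      have "T ^^ mM M = Mop (\<lambda>n. c n ^ mM M)" using Tpow by (intro ext) simp
      then show ?thesis using Mop_bl[OF bvck] bounded_linear.linear by metis
    qed
    show "linear (P N)" for N by (rule linear_P)
    fix M x
    define \<eta> :: real where "\<eta> = (1/4) ^ Suc M"
    have "norm (P (Suc M) x - x + Mop (\<lambda>n. c n ^ mM M) x)
        \<le> \<eta> * (real (Suc M) * (2 * Kb) + (3 * Kb + 4) * (Kb + 1)) * norm x"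
    proof (rule approx_mult)
      show "mono (\<lambda>n. c n ^ mM M)"
        unfolding mono_def using cmono c01 by (auto simp: mono_def less_imp_le intro!: power_mono)
      show "0 \<le> c n ^ mM M" for n using c01[of n] by simp
      show "c n ^ mM M \<le> 1" for n using c01[of n] by (simp add: power_le_one less_imp_le)
      have "c M ^ mM M \<le> exp (- (lam M / 2)) ^ mM M"
        using c01[of M] exp_ge_add_one_self[of "- (lam M / 2)"] by (intro power_mono) (auto simp: c_def)
      also have "\<dots> = exp (- (sM M * lam M))"
        by (simp add: exp_of_nat_mult[symmetric] mMr)
      also have "\<dots> \<le> \<eta>" unfolding sM_lam \<eta>_def by (rule exp_head)
      finally show "c M ^ mM M \<le> \<eta>" .
      have "1 + real (mM M) * (- (lam (Suc M) / 2)) \<le> (1 + - (lam (Suc M) / 2)) ^ mM M"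
        by (rule Bernoulli_inequality) (use lam_le1[of "Suc M"] in simp)
      then show "1 - \<eta> \<le> c (Suc M) ^ mM M"
        using sM_lam_Suc[of M] unfolding \<eta>_def c_def mMr by (simp add: algebra_simps)
    qed
    also have "\<eta> * (real (Suc M) * (2 * Kb) + (3 * Kb + 4) * (Kb + 1)) \<le> C * (1/2)^M"
    proof -
      have "\<eta> * (real (Suc M) * (2 * Kb) + (3 * Kb + 4) * (Kb + 1)) = (\<eta> * real (Suc M)) * (2 * Kb) + \<eta> * ((3 * Kb + 4) * (Kb + 1))"
        by (simp add: algebra_simps)
      also have "\<dots> \<le> (1/2)^M * (2 * Kb) + (1/2)^M * ((3 * Kb + 4) * (Kb + 1))"
        using eta_bounds[of M] Kb(1) unfolding \<eta>_def by (intro add_mono mult_right_mono) auto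
      finally show ?thesis by (simp add: C_def algebra_simps)
    qed
    then have "\<eta> * (real (Suc M) * (2 * Kb) + (3 * Kb + 4) * (Kb + 1)) * norm x \<le> C * (1/2)^M * norm x"
      by (rule mult_right_mono) simp
    finally show "norm (P (Suc M) x - x + (T ^^ mM M) x) \<le> C * (1 / 2) ^ M * norm x"
      using Tpow by simp
  qed
  show ?thesis
  proof (intro exI conjI allI impI)
    show "mono c" by (rule cmono)
    show "0 < c n" "c n < 1" for n by (rule c01)+
    show "bounded_linear T" unfolding T_def by (rule Mop_bl[OF bvc])
    show "(\<lambda>N. \<Sum>n<N. c n *\<^sub>R p n x) \<longlonglongrightarrow> T x" for x
      unfolding T_def by (rule mult_conv(1)[OF bvc])
    show "norm ((T ^^ n) x) \<le> (3 * Kb + 4) * norm x" for n x by (rule Tkb)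
    show "norm (real n *\<^sub>R (T ^^ n) (x - T x)) \<le> (2 * (Kb + 2) + 4 * (Kb + 1)) * norm x" for n x
      unfolding ritt by (rule mult_conv(2)[OF bvh])
    show "\<not> R_bounded {T ^^ n | n. True}" by (rule notRT)
  qed
qed

end

theorem theorem3:
  fixes J :: "'a::banach \<Rightarrow> 'a" and Xs :: "nat \<Rightarrow> 'a set"
  assumes "complex_structure J"
    and "schauder_decomposition J Xs"
    and "\<not> R_schauder J Xs"
  shows "(\<exists>a :: nat \<Rightarrow> real. mono a \<and> (\<forall>n. 0 < a n) \<and>
           (\<exists>B :: 'a \<Rightarrow> 'a. bounded_linear B \<and>
              (\<forall>x. (\<lambda>N. \<Sum>n<N. (1 / a n) *\<^sub>R sd_coord Xs n x) \<longlonglongrightarrow> B x) \<and>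
              \<not> R_bounded {op_exp_neg t B | t. t \<ge> 0}))
       \<and> (\<exists>c :: nat \<Rightarrow> real. mono c \<and> (\<forall>n. 0 < c n \<and> c n < 1) \<and>
           (\<exists>T :: 'a \<Rightarrow> 'a. bounded_linear T \<and>
              (\<forall>x. (\<lambda>N. \<Sum>n<N. c n *\<^sub>R sd_coord Xs n x) \<longlonglongrightarrow> T x) \<and>
              (\<exists>M. \<forall>n x. norm ((T ^^ n) x) \<le> M * norm x) \<and>
              (\<exists>M. \<forall>n x. n \<ge> 1 \<longrightarrow> norm (real n *\<^sub>R (T ^^ n) (x - T x)) \<le> M * norm x) \<and>
              \<not> R_bounded {T ^^ n | n. True}))"
proof -
  interpret sdec J Xs by unfold_locales (rule assms(2))
  have notR: "\<not> R_bounded {sd_partial Xs N | N. N \<ge> 1}"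
    using assms(2,3) by (simp add: R_schauder_def)
  show ?thesis using part_a[OF notR] part_b[OF notR] by blast
qed

end
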